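(* Let $(G,M,\Delta)$ be a Garside structure and $(H,N,\delta)$ a parabolic substructure. Put $\omega=\delta^{-1}\Delta$, $\Phi(\alpha)=\Delta\alpha\Delta^{-1}$ for $\alpha\in G$ and $\varphi(\beta)=\delta\beta\delta^{-1}$ for $\beta\in H$. Let $b\in N$. Then $b\wedge_L\omega=1$ and $b\vee_L\omega=b\omega=\omega b'$, where $b'=(\Phi^{-1}\circ\varphi)(b)$.
   Context: Let $G$ be a group and $M$ a submonoid with $M\cap M^{-1}=\{1\}$. Define $\alpha\le_L\beta$ iff $\alpha^{-1}\beta\in M$, and $\alpha\le_R\beta$ iff $\beta\alpha^{-1}\in M$. For $a\in M$ let $\mathrm{Div}_L(a)=\{b\in M: b\le_L a\}$, $\mathrm{Div}_R(a)=\{b\in M: b\le_R a\}$; $a$ is balanced if these coincide, and then $\mathrm{Div}(a)$ denotes this set. $M$ is Noetherian if each $a\in M$ admits an $n$ such that $a$ is not a product of more than $n$ non-trivial factors. A Garside structure $(G,M,\Delta)$: $\Delta\in M$ balanced, $M$ Noetherian, $\mathrm{Div}(\Delta)$ finite and generating $M$ as a monoid and $G$ as a group, $(G,\le_L)$ a lattice with meet $\wedge_L$ and join $\vee_L$. A parabolic substructure $(H,N,\delta)$: $\delta\in M$ balanced, $H$ (resp. $N$) the subgroup (resp. submonoid) generated by $\mathrm{Div}(\delta)$, and $\mathrm{Div}(\delta)=\mathrm{Div}(\Delta)\cap N$; it is assumed $H\neq\{1\}$. *)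

theory Defs
  imports "HOL-Algebra.Algebra"
begin

definition leL :: "('a, 'b) monoid_scheme \<Rightarrow> 'a set \<Rightarrow> 'a \<Rightarrow> 'a \<Rightarrow> bool" where
  "leL G M a b \<longleftrightarrow> inv\<^bsub>G\<^esub> a \<otimes>\<^bsub>G\<^esub> b \<in> M"

definition leR :: "('a, 'b) monoid_scheme \<Rightarrow> 'a set \<Rightarrow> 'a \<Rightarrow> 'a \<Rightarrow> bool" where
  "leR G M a b \<longleftrightarrow> b \<otimes>\<^bsub>G\<^esub> inv\<^bsub>G\<^esub> a \<in> M"

definition DivL :: "('a, 'b) monoid_scheme \<Rightarrow> 'a set \<Rightarrow> 'a \<Rightarrow> 'a set" where
  "DivL G M a = {b \<in> M. leL G M b a}"

definition DivR :: "('a, 'b) monoid_scheme \<Rightarrow> 'a set \<Rightarrow> 'a \<Rightarrow> 'a set" where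
  "DivR G M a = {b \<in> M. leR G M b a}"

definition balanced :: "('a, 'b) monoid_scheme \<Rightarrow> 'a set \<Rightarrow> 'a \<Rightarrow> bool" where
  "balanced G M a \<longleftrightarrow> a \<in> M \<and> DivL G M a = DivR G M a"

text \<open>For balanced a, Div(a) is the common value of DivL and DivR.\<close>
definition Div :: "('a, 'b) monoid_scheme \<Rightarrow> 'a set \<Rightarrow> 'a \<Rightarrow> 'a set" where
  "Div G M a = DivL G M a"

definition lprod :: "('a, 'b) monoid_scheme \<Rightarrow> 'a list \<Rightarrow> 'a" where
  "lprod G xs = foldr (\<lambda>x y. x \<otimes>\<^bsub>G\<^esub> y) xs \<one>\<^bsub>G\<^esub>"

definition monoid_gen :: "('a, 'b) monoid_scheme \<Rightarrow> 'a set \<Rightarrow> 'a set" where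
  "monoid_gen G S = {lprod G xs | xs. set xs \<subseteq> S}"

definition noetherian :: "('a, 'b) monoid_scheme \<Rightarrow> 'a set \<Rightarrow> bool" where
  "noetherian G M \<longleftrightarrow> (\<forall>a\<in>M. \<exists>n::nat. \<forall>xs. set xs \<subseteq> M - {\<one>\<^bsub>G\<^esub>} \<and> lprod G xs = a \<longrightarrow> length xs \<le> n)"

definition is_meetL :: "('a, 'b) monoid_scheme \<Rightarrow> 'a set \<Rightarrow> 'a \<Rightarrow> 'a \<Rightarrow> 'a \<Rightarrow> bool" where
  "is_meetL G M a b c \<longleftrightarrow> c \<in> carrier G \<and> leL G M c a \<and> leL G M c b \<and>
     (\<forall>d\<in>carrier G. leL G M d a \<and> leL G M d b \<longrightarrow> leL G M d c)"

definition is_joinL :: "('a, 'b) monoid_scheme \<Rightarrow> 'a set \<Rightarrow> 'a \<Rightarrow> 'a \<Rightarrow> 'a \<Rightarrow> bool" where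
  "is_joinL G M a b c \<longleftrightarrow> c \<in> carrier G \<and> leL G M a c \<and> leL G M b c \<and>
     (\<forall>d\<in>carrier G. leL G M a d \<and> leL G M b d \<longrightarrow> leL G M c d)"

definition meetL :: "('a, 'b) monoid_scheme \<Rightarrow> 'a set \<Rightarrow> 'a \<Rightarrow> 'a \<Rightarrow> 'a" where
  "meetL G M a b = (THE c. is_meetL G M a b c)"

definition joinL :: "('a, 'b) monoid_scheme \<Rightarrow> 'a set \<Rightarrow> 'a \<Rightarrow> 'a \<Rightarrow> 'a" where
  "joinL G M a b = (THE c. is_joinL G M a b c)"

definition lattice_L :: "('a, 'b) monoid_scheme \<Rightarrow> 'a set \<Rightarrow> bool" where
  "lattice_L G M \<longleftrightarrow> (\<forall>a\<in>carrier G. \<forall>b\<in>carrier G.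
     (\<exists>c. is_meetL G M a b c) \<and> (\<exists>c. is_joinL G M a b c))"

definition pos_submonoid :: "('a, 'b) monoid_scheme \<Rightarrow> 'a set \<Rightarrow> bool" where
  "pos_submonoid G M \<longleftrightarrow> M \<subseteq> carrier G \<and> \<one>\<^bsub>G\<^esub> \<in> M \<and>
     (\<forall>x\<in>M. \<forall>y\<in>M. x \<otimes>\<^bsub>G\<^esub> y \<in> M) \<and> M \<inter> (\<lambda>x. inv\<^bsub>G\<^esub> x) ` M = {\<one>\<^bsub>G\<^esub>}"

definition garside_structure :: "('a, 'b) monoid_scheme \<Rightarrow> 'a set \<Rightarrow> 'a \<Rightarrow> bool" where
  "garside_structure G M \<Delta> \<longleftrightarrow> group G \<and> pos_submonoid G M \<and>
     balanced G M \<Delta> \<and> noetherian G M \<and> finite (Div G M \<Delta>) \<and>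
     monoid_gen G (Div G M \<Delta>) = M \<and> generate G (Div G M \<Delta>) = carrier G \<and>
     lattice_L G M"

definition parabolic_substructure ::
  "('a, 'b) monoid_scheme \<Rightarrow> 'a set \<Rightarrow> 'a \<Rightarrow> 'a set \<Rightarrow> 'a set \<Rightarrow> 'a \<Rightarrow> bool" where
  "parabolic_substructure G M \<Delta> H N \<delta> \<longleftrightarrow> balanced G M \<delta> \<and>
     H = generate G (Div G M \<delta>) \<and> N = monoid_gen G (Div G M \<delta>) \<and>
     Div G M \<delta> = Div G M \<Delta> \<inter> N \<and> H \<noteq> {\<one>\<^bsub>G\<^esub>}"

end

theory Submission imports Defs begin

lemma lprod_Nil[simp]: "lprod G [] = \<one>\<^bsub>G\<^esub>" by (simp add: lprod_def)
lemma lprod_Cons[simp]: "lprod G (x#xs) = x \<otimes>\<^bsub>G\<^esub> lprod G xs" by (simp add: lprod_def)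

locale gar = group G for G (structure) +
  fixes M :: "'a set" and D d :: 'a and N :: "'a set"
  assumes sub: "M \<subseteq> carrier G" and one_M: "\<one> \<in> M"
    and mult_M: "x \<in> M \<Longrightarrow> y \<in> M \<Longrightarrow> x \<otimes> y \<in> M"
    and pos: "x \<in> M \<Longrightarrow> inv x \<in> M \<Longrightarrow> x = \<one>"
    and balD: "balanced G M D" and genM: "monoid_gen G (Div G M D) = M"
    and lat: "lattice_L G M"
    and bald: "balanced G M d" and N_def: "N = monoid_gen G (Div G M d)"
    and Divd: "Div G M d = Div G M D \<inter> N"
begin

lemma inM[simp]: "x \<in> M \<Longrightarrow> x \<in> carrier G" using sub by auto

lemma cancel1[simp]: "x \<in> carrier G \<Longrightarrow> y \<in> carrier G \<Longrightarrow> x \<otimes> (inv x \<otimes> y) = y"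
  by (metis inv_closed l_one m_assoc r_inv)
lemma cancel2[simp]: "x \<in> carrier G \<Longrightarrow> y \<in> carrier G \<Longrightarrow> inv x \<otimes> (x \<otimes> y) = y"
  by (metis inv_closed l_one m_assoc l_inv)

lemmas gs = m_assoc inv_mult_group

lemma lprod_carrier: "set xs \<subseteq> carrier G \<Longrightarrow> lprod G xs \<in> carrier G"
  by (induction xs) auto
lemma lprod_append: "set xs \<subseteq> carrier G \<Longrightarrow> set ys \<subseteq> carrier G \<Longrightarrow>
   lprod G (xs @ ys) = lprod G xs \<otimes> lprod G ys"
  by (induction xs) (auto simp: m_assoc lprod_carrier)
lemma lprod_M: "set xs \<subseteq> M \<Longrightarrow> lprod G xs \<in> M"
  by (induction xs) (auto simp: one_M mult_M)

lemma mg_mult: assumes "S \<subseteq> carrier G" "a \<in> monoid_gen G S" "b \<in> monoid_gen G S"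
  shows "a \<otimes> b \<in> monoid_gen G S"
proof -
  obtain xs ys where "a = lprod G xs" "set xs \<subseteq> S" "b = lprod G ys" "set ys \<subseteq> S"
    using assms unfolding monoid_gen_def by auto
  then show ?thesis unfolding monoid_gen_def using assms(1)
    by (auto intro!: exI[of _ "xs@ys"] simp: lprod_append)
qed
lemma mg_in: "S \<subseteq> carrier G \<Longrightarrow> s \<in> S \<Longrightarrow> s \<in> monoid_gen G S"
  unfolding monoid_gen_def by (auto intro!: exI[of _ "[s]"])

lemma le_trans: "x \<in> carrier G \<Longrightarrow> y \<in> carrier G \<Longrightarrow> z \<in> carrier G \<Longrightarrow>
  leL G M x y \<Longrightarrow> leL G M y z \<Longrightarrow> leL G M x z"
  unfolding leL_def using mult_M[of "inv x \<otimes> y" "inv y \<otimes> z"] by (simp add: m_assoc)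
lemma le_antisym: "x \<in> carrier G \<Longrightarrow> y \<in> carrier G \<Longrightarrow>
  leL G M x y \<Longrightarrow> leL G M y x \<Longrightarrow> x = y"
  unfolding leL_def using pos[of "inv x \<otimes> y"]
  by (simp add: inv_mult_group) (metis cancel1 inv_closed r_one)
lemma le_refl: "x \<in> carrier G \<Longrightarrow> leL G M x x" unfolding leL_def by (simp add: one_M)
lemma le_one: "x \<in> carrier G \<Longrightarrow> leL G M \<one> x \<longleftrightarrow> x \<in> M" unfolding leL_def by simp

lemma D_M: "D \<in> M" using balD unfolding balanced_def by auto
lemma d_M: "d \<in> M" using bald unfolding balanced_def by auto

lemma bal_conj:
  assumes b: "balanced G M a" and s: "s \<in> Div G M a"
  shows "inv a \<otimes> s \<otimes> a \<in> Div G M a" "a \<otimes> s \<otimes> inv a \<in> Div G M a"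
proof -
  have aM: "a \<in> M" and eq: "DivL G M a = DivR G M a" using b unfolding balanced_def by auto
  have sM: "s \<in> M" and sl: "inv s \<otimes> a \<in> M" using s unfolding Div_def DivL_def leL_def by auto
  have sr: "a \<otimes> inv s \<in> M" using s eq unfolding Div_def DivR_def leR_def by auto
  have "inv s \<otimes> a \<in> DivR G M a" unfolding DivR_def leR_def using sl aM sM
    by (simp add: inv_mult_group m_assoc)
  hence "inv s \<otimes> a \<in> DivL G M a" using eq by simp
  hence 1: "inv a \<otimes> s \<otimes> a \<in> M" unfolding DivL_def leL_def using aM sM
    by (simp add: inv_mult_group m_assoc)
  have "inv a \<otimes> s \<otimes> a \<in> DivR G M a" unfolding DivR_def leR_def using 1 sl aM sM
    by (simp add: inv_mult_group m_assoc)
  thus "inv a \<otimes> s \<otimes> a \<in> Div G M a" using eq by (simp add: Div_def)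
  have "a \<otimes> inv s \<in> DivL G M a" unfolding DivL_def leL_def using sr aM sM
    by (simp add: inv_mult_group m_assoc)
  hence "a \<otimes> inv s \<in> DivR G M a" using eq by simp
  hence 2: "a \<otimes> s \<otimes> inv a \<in> M" unfolding DivR_def leR_def using aM sM
    by (simp add: inv_mult_group m_assoc)
  have "a \<otimes> s \<otimes> inv a \<in> DivL G M a" unfolding DivL_def leL_def using 2 sr aM sM
    by (simp add: inv_mult_group m_assoc)
  thus "a \<otimes> s \<otimes> inv a \<in> Div G M a" by (simp add: Div_def)
qed


lemma Div_iff: "x \<in> Div G M a \<longleftrightarrow> x \<in> M \<and> leL G M x a"
  by (simp add: Div_def DivL_def)

lemma Divd_D: "x \<in> Div G M d \<Longrightarrow> x \<in> Div G M D" using Divd by auto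
lemma Divd_N: "x \<in> Div G M d \<Longrightarrow> x \<in> N" using Divd by auto
lemma DivM: "x \<in> Div G M a \<Longrightarrow> x \<in> M" by (simp add: Div_iff)
lemma DivC: "x \<in> Div G M a \<Longrightarrow> x \<in> carrier G" by (simp add: Div_iff)
lemma d_Div: "d \<in> Div G M d" using d_M by (simp add: Div_iff le_refl)
lemma d_DivD: "d \<in> Div G M D" using d_Div Divd_D by blast
lemma N_mult: "x \<in> N \<Longrightarrow> y \<in> N \<Longrightarrow> x \<otimes> y \<in> N"
  unfolding N_def by (rule mg_mult) (auto dest: DivC)
lemma NM: "x \<in> N \<Longrightarrow> x \<in> M"
  unfolding N_def monoid_gen_def by (auto intro!: lprod_M dest: DivM)
lemma w_M: "inv d \<otimes> D \<in> M" using d_DivD by (simp add: Div_iff leL_def)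
lemma DC[simp]: "D \<in> carrier G" and dC[simp]: "d \<in> carrier G" using D_M d_M by auto

lemma join_ex: "x \<in> carrier G \<Longrightarrow> y \<in> carrier G \<Longrightarrow> \<exists>j. is_joinL G M x y j"
  using lat unfolding lattice_L_def by auto
lemma meet_ex: "x \<in> carrier G \<Longrightarrow> y \<in> carrier G \<Longrightarrow> \<exists>j. is_meetL G M x y j"
  using lat unfolding lattice_L_def by auto

lemma prefix: "set ts \<subseteq> Div G M d \<Longrightarrow> s \<in> Div G M D \<Longrightarrow> leL G M s (lprod G ts) \<Longrightarrow> s \<in> Div G M d"
proof (induction ts arbitrary: s)
  case Nil
  then have "s = \<one>" using pos[of s] by (auto simp: leL_def Div_iff)
  then show ?case using one_M d_M by (simp add: Div_iff leL_def)
next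
  case (Cons t rest)
  have tD: "t \<in> Div G M d" and rest: "set rest \<subseteq> Div G M d" using Cons by auto
  have tC: "t \<in> carrier G" and tM: "t \<in> M" using tD by (auto simp: Div_iff)
  have sC: "s \<in> carrier G" and sM: "s \<in> M" using Cons by (auto simp: Div_iff)
  have rM: "lprod G rest \<in> M" using rest by (auto intro!: lprod_M dest: DivM)
  hence rC: "lprod G rest \<in> carrier G" by simp
  obtain j where j: "is_joinL G M s t j" using join_ex[OF sC tC] by blast
  have jC: "j \<in> carrier G" and sj: "leL G M s j" and tj: "leL G M t j"
    and jl: "\<And>e. e \<in> carrier G \<Longrightarrow> leL G M s e \<Longrightarrow> leL G M t e \<Longrightarrow> leL G M j e"
    using j unfolding is_joinL_def by auto
  have "leL G M j D" using jl[of D] Cons.prems(2) Divd_D[OF tD] by (simp add: Div_iff)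
  moreover have jtr: "leL G M j (t \<otimes> lprod G rest)"
    using jl[of "t \<otimes> lprod G rest"] Cons.prems(3) rM tC by (simp add: leL_def)
  moreover have jM: "j \<in> M" using tj tM unfolding leL_def
    by (metis cancel1 jC mult_M tC)
  define u where "u = inv t \<otimes> j"
  have uM: "u \<in> M" using tj by (simp add: u_def leL_def)
  have ur: "leL G M u (lprod G rest)" using jtr tC jC rC
    by (simp add: u_def leL_def inv_mult_group m_assoc)
  have "inv u \<otimes> D = (inv j \<otimes> D) \<otimes> (inv D \<otimes> t \<otimes> D)"
    using tC jC by (simp add: u_def inv_mult_group m_assoc)
  moreover have "inv D \<otimes> t \<otimes> D \<in> M" using bal_conj(1)[OF balD Divd_D[OF tD]] by (rule DivM)
  ultimately have "inv u \<otimes> D \<in> M" using \<open>leL G M j D\<close> mult_M by (simp add: leL_def)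
  hence "u \<in> Div G M D" using uM by (simp add: Div_iff leL_def)
  hence "u \<in> Div G M d" using Cons.IH[OF rest _ ur] by blast
  hence "t \<otimes> u \<in> N" using tD by (intro N_mult Divd_N)
  moreover have "t \<otimes> u = j" using tC jC by (simp add: u_def)
  ultimately have "j \<in> Div G M d" using Divd jM \<open>leL G M j D\<close> by (simp add: Div_iff)
  hence "leL G M s d" using le_trans[OF sC jC dC sj] by (simp add: Div_iff)
  then show ?case using sM by (simp add: Div_iff)
qed


lemma DivR_iff: "balanced G M a \<Longrightarrow> x \<in> Div G M a \<longleftrightarrow> x \<in> M \<and> leR G M x a"
  by (simp add: Div_def balanced_def DivR_def)

lemma meet_M: "set xs \<subseteq> Div G M D \<Longrightarrow> b \<in> N \<Longrightarrow> leL G M (lprod G xs) b \<Longrightarrow>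
   leL G M (lprod G xs) (inv d \<otimes> D) \<Longrightarrow> lprod G xs = \<one>"
proof (induction xs)
  case Nil then show ?case by simp
next
  case (Cons x rest)
  obtain ts where ts: "set ts \<subseteq> Div G M d" "b = lprod G ts"
    using Cons.prems(2) unfolding N_def monoid_gen_def by auto
  have xD: "x \<in> Div G M D" and rest: "set rest \<subseteq> Div G M D" using Cons by auto
  have xC: "x \<in> carrier G" and xM: "x \<in> M" using xD by (auto simp: Div_iff)
  have rM: "lprod G rest \<in> M" using rest by (auto intro!: lprod_M dest: DivM)
  hence rC: "lprod G rest \<in> carrier G" by simp
  have bC: "b \<in> carrier G" using Cons.prems(2) NM by simp
  have wC: "inv d \<otimes> D \<in> carrier G" by simp
  have xc: "leL G M x (x \<otimes> lprod G rest)" using rM xC rC by (simp add: leL_def)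
  have xb: "leL G M x b" using le_trans[OF xC _ bC xc] Cons.prems(3) xC rC by simp
  have xw: "leL G M x (inv d \<otimes> D)" using le_trans[OF xC _ wC xc] Cons.prems(4) xC rC by simp
  have xd: "x \<in> Div G M d" using prefix[OF ts(1) xD] xb ts(2) by simp
  have dxM: "d \<otimes> x \<in> M" using d_M xM mult_M by simp
  have "inv (d \<otimes> x) \<otimes> D = inv x \<otimes> (inv d \<otimes> D)" using xC by (simp add: inv_mult_group m_assoc)
  hence "d \<otimes> x \<in> Div G M D" using xw dxM by (simp add: Div_iff leL_def)
  moreover have "d \<otimes> x \<in> N" using xd d_Div by (intro N_mult Divd_N)
  ultimately have "d \<otimes> x \<in> Div G M d" using Divd by simp
  hence "inv (d \<otimes> x) \<otimes> d \<in> M" by (simp add: Div_iff leL_def)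
  hence "inv x \<in> M" using xC by (simp add: inv_mult_group m_assoc)
  hence x1: "x = \<one>" using pos[OF xM] by blast
  have "lprod G rest = \<one>" using Cons.IH[OF rest Cons.prems(2)] Cons.prems(3,4) x1 rC by simp
  then show ?case using x1 by simp
qed

lemma keyK: assumes tD: "t \<in> Div G M d" and yM: "y \<in> M"
  and le: "leL G M (inv d \<otimes> D) (t \<otimes> y)" shows "leL G M (inv d \<otimes> D) y"
proof -
  have tC: "t \<in> carrier G" using tD by (simp add: Div_iff)
  have yC: "y \<in> carrier G" using yM by simp
  define p where "p = d \<otimes> t \<otimes> inv d"
  have pd: "p \<in> Div G M d" unfolding p_def by (rule bal_conj(2)[OF bald tD])
  have pC: "p \<in> carrier G" using pd by (simp add: Div_iff)
  have pD: "p \<in> Div G M D" using pd by (rule Divd_D)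
  have A: "leL G M (inv p \<otimes> D) (d \<otimes> y)" using le tC yC
    by (simp add: leL_def p_def inv_mult_group m_assoc)
  have B: "leL G M d (d \<otimes> y)" using yM yC by (simp add: leL_def)
  have aC: "inv p \<otimes> D \<in> carrier G" using pC by simp
  obtain J where J: "is_joinL G M (inv p \<otimes> D) d J" using join_ex[OF aC dC] by blast
  have JC: "J \<in> carrier G" and aJ: "leL G M (inv p \<otimes> D) J" and dJ: "leL G M d J"
    and jl: "\<And>e. e \<in> carrier G \<Longrightarrow> leL G M (inv p \<otimes> D) e \<Longrightarrow> leL G M d e \<Longrightarrow> leL G M J e"
    using J unfolding is_joinL_def by auto
  have JD: "leL G M J D"
  proof (rule jl)
    show "leL G M (inv p \<otimes> D) D" using bal_conj(1)[OF balD pD] pC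
      by (simp add: leL_def inv_mult_group m_assoc Div_iff)
    show "leL G M d D" using d_DivD by (simp add: Div_iff)
  qed simp
  have Jdy: "leL G M J (d \<otimes> y)" using jl[OF _ A B] yC by simp
  define q where "q = inv J \<otimes> D"
  have qM: "q \<in> M" using JD by (simp add: q_def leL_def)
  have qC: "q \<in> carrier G" using qM by simp
  have Jq: "J = D \<otimes> inv q" using JC by (simp add: q_def inv_mult_group m_assoc)
  have "D \<otimes> inv q \<in> M" using Jq dJ JC d_M
    by (metis cancel1 dC leL_def mult_M)
  hence qDD: "q \<in> Div G M D" using DivR_iff[OF balD] qM by (simp add: leR_def)
  define r where "r = D \<otimes> q \<otimes> inv D"
  have rD: "r \<in> Div G M D" unfolding r_def by (rule bal_conj(2)[OF balD qDD])
  have rM: "r \<in> M" and rC: "r \<in> carrier G" using rD by (auto simp: Div_iff)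
  define p1 where "p1 = inv D \<otimes> p \<otimes> D"
  have p1D: "p1 \<in> Div G M D" unfolding p1_def by (rule bal_conj(1)[OF balD pD])
  have p1C: "p1 \<in> carrier G" using p1D by (simp add: Div_iff)
  define m where "m = p1 \<otimes> inv q"
  have mM: "m \<in> M" using aJ Jq pC qC
    by (simp add: leL_def m_def p1_def inv_mult_group m_assoc)
  have mC: "m \<in> carrier G" using mM by simp
  have "leL G M m p1" using qM qC p1C by (simp add: leL_def m_def inv_mult_group m_assoc)
  hence "leL G M m D" using le_trans[OF mC p1C DC] p1D by (simp add: Div_iff)
  hence "m \<in> Div G M D" using mM by (simp add: Div_iff)
  hence "D \<otimes> m \<otimes> inv D \<in> Div G M D" by (rule bal_conj(2)[OF balD])
  moreover have "D \<otimes> m \<otimes> inv D = p \<otimes> inv r" using pC qC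
    by (simp add: m_def p1_def r_def inv_mult_group m_assoc)
  ultimately have prM: "p \<otimes> inv r \<in> M" by (simp add: Div_iff)
  have "d \<otimes> inv p \<in> M" using pd DivR_iff[OF bald] by (simp add: leR_def)
  moreover have "d \<otimes> inv r = (d \<otimes> inv p) \<otimes> (p \<otimes> inv r)" using pC rC by (simp add: m_assoc)
  ultimately have "d \<otimes> inv r \<in> M" using mult_M[OF _ prM] by simp
  hence rd: "r \<in> Div G M d" using DivR_iff[OF bald] rM by (simp add: leR_def)
  have "inv (r \<otimes> d) \<otimes> D = inv d \<otimes> J" using Jq qC
    by (simp add: r_def inv_mult_group m_assoc)
  hence "inv (r \<otimes> d) \<otimes> D \<in> M" using dJ by (simp add: leL_def)
  moreover have "r \<otimes> d \<in> M" using rM d_M mult_M by simp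
  ultimately have "r \<otimes> d \<in> Div G M D" by (simp add: Div_iff leL_def)
  moreover have "r \<otimes> d \<in> N" using rd d_Div by (intro N_mult Divd_N)
  ultimately have "r \<otimes> d \<in> Div G M d" using Divd by simp
  hence "d \<otimes> inv (r \<otimes> d) \<in> M" using DivR_iff[OF bald] by (simp add: leR_def)
  hence "inv r \<in> M" using rC by (simp add: inv_mult_group m_assoc)
  hence "r = \<one>" using pos[OF rM] by blast
  hence "q = \<one>" using qC unfolding r_def
    by (metis DC cancel2 inv_closed m_assoc m_closed r_inv r_one)
  hence "J = D" using Jq by simp
  thus ?thesis using Jdy yC by (simp add: leL_def inv_mult_group m_assoc)
qed

lemma join_lem: "set ts \<subseteq> Div G M d \<Longrightarrow> x \<in> M \<Longrightarrow>
  leL G M (inv d \<otimes> D) (lprod G ts \<otimes> x) \<Longrightarrow> leL G M (inv d \<otimes> D) x"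
proof (induction ts arbitrary: x)
  case Nil then show ?case by simp
next
  case (Cons t rest)
  have tD: "t \<in> Div G M d" and rest: "set rest \<subseteq> Div G M d" using Cons by auto
  have rM: "lprod G rest \<in> M" using rest by (auto intro!: lprod_M dest: DivM)
  have "leL G M (inv d \<otimes> D) (t \<otimes> (lprod G rest \<otimes> x))"
    using Cons.prems(3) rM Cons.prems(2) tD by (simp add: m_assoc Div_iff)
  hence "leL G M (inv d \<otimes> D) (lprod G rest \<otimes> x)"
    using keyK[OF tD] rM Cons.prems(2) mult_M by simp
  then show ?case using Cons.IH[OF rest Cons.prems(2)] by simp
qed

lemma upper: "set ts \<subseteq> Div G M d \<Longrightarrow> inv (inv d \<otimes> D) \<otimes> lprod G ts \<otimes> (inv d \<otimes> D) \<in> M"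
proof (induction ts)
  case Nil then show ?case using one_M by (simp add: m_assoc)
next
  case (Cons t rest)
  have tD: "t \<in> Div G M d" and rest: "set rest \<subseteq> Div G M d" using Cons by auto
  have tC: "t \<in> carrier G" using tD by (simp add: Div_iff)
  have rC: "lprod G rest \<in> carrier G" using rest by (auto intro!: lprod_carrier dest: DivC)
  have "inv D \<otimes> (d \<otimes> t \<otimes> inv d) \<otimes> D \<in> Div G M D"
    by (rule bal_conj(1)[OF balD Divd_D[OF bal_conj(2)[OF bald tD]]])
  hence 1: "inv D \<otimes> (d \<otimes> t \<otimes> inv d) \<otimes> D \<in> M" by (rule DivM)
  have "inv (inv d \<otimes> D) \<otimes> lprod G (t # rest) \<otimes> (inv d \<otimes> D) =
     (inv D \<otimes> (d \<otimes> t \<otimes> inv d) \<otimes> D) \<otimes> (inv (inv d \<otimes> D) \<otimes> lprod G rest \<otimes> (inv d \<otimes> D))"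
    using tC rC by (simp add: inv_mult_group m_assoc)
  then show ?case using mult_M[OF 1 Cons.IH[OF rest]] by simp
qed


lemma meet_is: assumes bN: "b \<in> N" shows "is_meetL G M b (inv d \<otimes> D) \<one>"
proof -
  have bM: "b \<in> M" using bN NM by simp
  have bC: "b \<in> carrier G" using bM by simp
  have wC: "inv d \<otimes> D \<in> carrier G" by simp
  obtain m where m: "is_meetL G M b (inv d \<otimes> D) m" using meet_ex[OF bC wC] by blast
  have mC: "m \<in> carrier G" and mb: "leL G M m b" and mw: "leL G M m (inv d \<otimes> D)"
    and ml: "\<And>e. e \<in> carrier G \<Longrightarrow> leL G M e b \<Longrightarrow> leL G M e (inv d \<otimes> D) \<Longrightarrow> leL G M e m"
    using m unfolding is_meetL_def by auto
  have "leL G M \<one> m" using ml[of \<one>] bM w_M by (simp add: le_one)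
  hence "m \<in> M" using mC le_one by simp
  then obtain xs where xs: "set xs \<subseteq> Div G M D" "m = lprod G xs"
    using genM unfolding monoid_gen_def by auto
  have m1: "m = \<one>" using meet_M[OF xs(1) bN] mb mw xs(2) by simp
  show ?thesis unfolding is_meetL_def
    using m1 ml bM w_M by (auto simp: le_one)
qed

lemma join_is: assumes bN: "b \<in> N" shows "is_joinL G M b (inv d \<otimes> D) (b \<otimes> (inv d \<otimes> D))"
proof -
  obtain ts where ts: "set ts \<subseteq> Div G M d" "b = lprod G ts"
    using bN unfolding N_def monoid_gen_def by auto
  have bM: "b \<in> M" using bN NM by simp
  have bC: "b \<in> carrier G" using bM by simp
  have wC: "inv d \<otimes> D \<in> carrier G" by simp
  have 1: "leL G M b (b \<otimes> (inv d \<otimes> D))" using w_M bC by (simp add: leL_def del: inv_mult_group)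
  have 2: "leL G M (inv d \<otimes> D) (b \<otimes> (inv d \<otimes> D))"
    using upper[OF ts(1)] ts(2) bC by (simp add: leL_def m_assoc del: inv_mult_group)
  have 3: "leL G M (b \<otimes> (inv d \<otimes> D)) e" if eC: "e \<in> carrier G" and be: "leL G M b e"
     and we: "leL G M (inv d \<otimes> D) e" for e
  proof -
    define x where "x = inv b \<otimes> e"
    have xM: "x \<in> M" using be by (simp add: x_def leL_def)
    have "e = lprod G ts \<otimes> x" using ts(2) bC eC by (simp add: x_def)
    hence "leL G M (inv d \<otimes> D) x" using join_lem[OF ts(1) xM] we by simp
    thus ?thesis using bC eC by (simp add: leL_def x_def inv_mult_group m_assoc)
  qed
  show ?thesis unfolding is_joinL_def using 1 2 3 bC by auto
qed

lemma meet_unique: "is_meetL G M a b c \<Longrightarrow> meetL G M a b = c"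
  unfolding meetL_def
  by (rule the_equality) (auto simp: is_meetL_def intro: le_antisym)
lemma join_unique: "is_joinL G M a b c \<Longrightarrow> joinL G M a b = c"
  unfolding joinL_def
  by (rule the_equality) (auto simp: is_joinL_def intro: le_antisym)

end

theorem lemma3p5:
  fixes G :: "('a, 'b) monoid_scheme" and M H N :: "'a set" and \<Delta> \<delta> b :: 'a
  assumes "garside_structure G M \<Delta>"
    and "parabolic_substructure G M \<Delta> H N \<delta>"
    and "b \<in> N"
  shows "let \<omega> = inv\<^bsub>G\<^esub> \<delta> \<otimes>\<^bsub>G\<^esub> \<Delta>;
             \<Phi>inv = (\<lambda>\<gamma>. inv\<^bsub>G\<^esub> \<Delta> \<otimes>\<^bsub>G\<^esub> \<gamma> \<otimes>\<^bsub>G\<^esub> \<Delta>);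
             \<phi> = (\<lambda>\<beta>. \<delta> \<otimes>\<^bsub>G\<^esub> \<beta> \<otimes>\<^bsub>G\<^esub> inv\<^bsub>G\<^esub> \<delta>);
             b' = \<Phi>inv (\<phi> b)
         in meetL G M b \<omega> = \<one>\<^bsub>G\<^esub> \<and>
            joinL G M b \<omega> = b \<otimes>\<^bsub>G\<^esub> \<omega> \<and>
            b \<otimes>\<^bsub>G\<^esub> \<omega> = \<omega> \<otimes>\<^bsub>G\<^esub> b'"
proof -
  have grp: "group G" and ps: "pos_submonoid G M" using assms(1) by (auto simp: garside_structure_def)
  interpret group G by (rule grp)
  have posM: "x = \<one>\<^bsub>G\<^esub>" if "x \<in> M" "inv\<^bsub>G\<^esub> x \<in> M" for x
  proof -
    have "x \<in> carrier G" using that ps by (auto simp: pos_submonoid_def)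
    hence "x \<in> (\<lambda>x. inv\<^bsub>G\<^esub> x) ` M" using that(2) by (metis image_eqI inv_inv)
    thus ?thesis using that(1) ps unfolding pos_submonoid_def by blast
  qed
  interpret gar G M \<Delta> \<delta> N
  proof (unfold_locales)
    show "M \<subseteq> carrier G" "\<one>\<^bsub>G\<^esub> \<in> M" using ps unfolding pos_submonoid_def by blast+
    show "\<And>x y. x \<in> M \<Longrightarrow> y \<in> M \<Longrightarrow> x \<otimes>\<^bsub>G\<^esub> y \<in> M" using ps unfolding pos_submonoid_def by blast+
    show "\<And>x. x \<in> M \<Longrightarrow> inv\<^bsub>G\<^esub> x \<in> M \<Longrightarrow> x = \<one>\<^bsub>G\<^esub>" by (rule posM)
    show "balanced G M \<Delta>" "monoid_gen G (Div G M \<Delta>) = M" "lattice_L G M"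
      using assms(1) unfolding garside_structure_def by blast+
    show "balanced G M \<delta>" "N = monoid_gen G (Div G M \<delta>)" "Div G M \<delta> = Div G M \<Delta> \<inter> N"
      using assms(2) unfolding parabolic_substructure_def by blast+
  qed
  have bC: "b \<in> carrier G" using assms(3) NM by simp
  have eq: "b \<otimes>\<^bsub>G\<^esub> (inv\<^bsub>G\<^esub> \<delta> \<otimes>\<^bsub>G\<^esub> \<Delta>) = (inv\<^bsub>G\<^esub> \<delta> \<otimes>\<^bsub>G\<^esub> \<Delta>) \<otimes>\<^bsub>G\<^esub> (inv\<^bsub>G\<^esub> \<Delta> \<otimes>\<^bsub>G\<^esub> (\<delta> \<otimes>\<^bsub>G\<^esub> b \<otimes>\<^bsub>G\<^esub> inv\<^bsub>G\<^esub> \<delta>) \<otimes>\<^bsub>G\<^esub> \<Delta>)"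
    using bC by (simp add: m_assoc)
  show ?thesis unfolding Let_def
    using meet_unique[OF meet_is[OF assms(3)]] join_unique[OF join_is[OF assms(3)]] eq by simp
qed

end
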